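(* Fix $\gamma\in(0,1)$. For $n\ge1$ define $\rho_n\colon\mathbb{R}\to\{-1,0,1\}$ by $\rho_n(x)=0$ if $x\in[j4^{-n},(j+1)4^{-n})$ with $j\equiv0,3\pmod 4$, $\rho_n(x)=1$ if $j\equiv1\pmod4$, and $\rho_n(x)=-1$ if $j\equiv2\pmod4$ ($j\in\mathbb{Z}$). Let $v_n(x)=\prod_{k=1}^n(1+\gamma\rho_{2k-1}(x))$ and $v_m^*(x)=\max(v_1(x),\dots,v_m(x))$. Then there exists a constant $c>0$ (depending on $\gamma$) such that \[\int_0^1 v_m^*(x)\,dx\ge cm\qquad\text{for all }m=1,2,\dots\] *)

theory Defs
  imports "HOL-Analysis.Analysis"
begin

definition rho :: "nat \<Rightarrow> real \<Rightarrow> real" where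
  "rho n x = (let j = \<lfloor>x * 4 ^ n\<rfloor> in
     if j mod 4 = 1 then 1 else if j mod 4 = 2 then -1 else 0)"

definition vprod :: "real \<Rightarrow> nat \<Rightarrow> real \<Rightarrow> real" where
  "vprod \<gamma> n x = (\<Prod>k = 1..n. 1 + \<gamma> * rho (2 * k - 1) x)"

definition vmax :: "real \<Rightarrow> nat \<Rightarrow> real \<Rightarrow> real" where
  "vmax \<gamma> m x = Max ((\<lambda>n. vprod \<gamma> n x) ` {1..m})"

end

theory Submission
  imports Defs
begin

definition aa :: "real \<Rightarrow> int \<Rightarrow> real" where
  "aa g t = 1 + g * (if t mod 4 = 1 then 1 else if t mod 4 = 2 then -1 else 0)"

primrec W :: "real \<Rightarrow> nat \<Rightarrow> int \<Rightarrow> real" where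
  "W g 0 j = 1"
| "W g (Suc k) j = max 1 (aa g (j div 16^k div 4) * W g k j)"

definition Wx :: "real \<Rightarrow> nat \<Rightarrow> real \<Rightarrow> real" where
  "Wx g k y = Max ((\<lambda>n. vprod g n y) ` {0..k})"

lemma rho_shift: "rho (n+2) y = rho n (16 * y)"
proof -
  have "\<lfloor>y * 4 ^ (n+2)\<rfloor> = \<lfloor>16 * y * 4 ^ n\<rfloor>" by (simp add: power_add mult.commute mult.left_commute)
  then show ?thesis by (simp only: rho_def)
qed

lemma rho1: "1 + g * rho 1 y = aa g \<lfloor>4 * y\<rfloor>"
  by (simp add: rho_def aa_def Let_def mult.commute)

lemma vprod_Suc: "vprod g (Suc n) y = aa g \<lfloor>4 * y\<rfloor> * vprod g n (16 * y)"
proof -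
  have "vprod g (Suc n) y = (\<Prod>k = 0..n. 1 + g * rho (2 * Suc k - 1) y)"
    unfolding vprod_def using prod.shift_bounds_cl_Suc_ivl[of "\<lambda>k. 1 + g * rho (2*k-1) y" 0 n] by simp
  also have "\<dots> = (1 + g * rho 1 y) * (\<Prod>k = 1..n. 1 + g * rho (2 * Suc k - 1) y)"
    by (simp add: prod.atLeast0_atMost_Suc_shift prod.atLeast_Suc_atMost[of 0] )
  also have "(\<Prod>k = 1..n. 1 + g * rho (2 * Suc k - 1) y) = vprod g n (16*y)"
    unfolding vprod_def
  proof (rule prod.cong)
    fix k assume "k \<in> {1..n}"
    then have e: "2 * Suc k - 1 = (2*k-1) + 2" by auto
    show "1 + g * rho (2 * Suc k - 1) y = 1 + g * rho (2 * k - 1) (16 * y)"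
      by (subst e, subst rho_shift) (rule refl)
  qed simp
  finally show ?thesis using rho1[of g y] by simp
qed

lemma aa_pos: "0 < g \<Longrightarrow> g < 1 \<Longrightarrow> 0 < aa g t"
  by (simp add: aa_def)

lemma vprod_pos: "0 < g \<Longrightarrow> g < 1 \<Longrightarrow> 0 < vprod g n y"
  unfolding vprod_def by (rule prod_pos) (auto simp: rho_def Let_def)

lemma Max_scale:
  fixes c :: real and f :: "nat \<Rightarrow> real"
  assumes "0 \<le> c" "finite A" "A \<noteq> {}"
  shows "Max ((\<lambda>n. c * f n) ` A) = c * Max (f ` A)"
proof -
  have "mono ((*) c)" using assms(1) by (auto simp: mono_def intro: mult_left_mono)
  then have "c * Max (f ` A) = Max (((*) c) ` (f ` A))"
    using assms by (intro mono_Max_commute) auto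
  then show ?thesis by (simp add: image_image)
qed

lemma img_Suc:
  assumes "0 < g" "g < 1"
  shows "(\<lambda>n. vprod g n y) ` (Suc ` {0..k}) = (\<lambda>n. aa g \<lfloor>4 * y\<rfloor> * vprod g n (16 * y)) ` {0..k}"
  by (simp only: image_image vprod_Suc)

lemma Wx_Suc:
  assumes "0 < g" "g < 1"
  shows "Wx g (Suc k) y = max 1 (aa g \<lfloor>4 * y\<rfloor> * Wx g k (16 * y))"
proof -
  have "{0..Suc k} = insert 0 (Suc ` {0..k})" by (auto simp: image_iff)
  then have "(\<lambda>n. vprod g n y) ` {0..Suc k} = insert 1 ((\<lambda>n. aa g \<lfloor>4 * y\<rfloor> * vprod g n (16 * y)) ` {0..k})"
    using img_Suc[OF assms] by (simp add: vprod_def)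
  then have "Wx g (Suc k) y = Max (insert 1 ((\<lambda>n. aa g \<lfloor>4 * y\<rfloor> * vprod g n (16 * y)) ` {0..k}))"
    unfolding Wx_def by simp
  also have "\<dots> = max 1 (aa g \<lfloor>4 * y\<rfloor> * Wx g k (16 * y))"
    unfolding Wx_def using aa_pos[OF assms] by (subst Max_insert) (auto simp: Max_scale less_imp_le)
  finally show ?thesis .
qed

lemma vmax_eq:
  assumes "0 < g" "g < 1"
  shows "vmax g (Suc k) y = aa g \<lfloor>4 * y\<rfloor> * Wx g k (16 * y)"
proof -
  have "{1..Suc k} = Suc ` {0..k}" by (auto simp: image_iff)
  then have "(\<lambda>n. vprod g n y) ` {1..Suc k} = (\<lambda>n. aa g \<lfloor>4 * y\<rfloor> * vprod g n (16 * y)) ` {0..k}"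
    using img_Suc[OF assms] by simp
  then show ?thesis
    unfolding Wx_def vmax_def using aa_pos[OF assms] by (simp add: Max_scale less_imp_le)
qed

lemma Wx_W:
  assumes "0 < g" "g < 1"
  shows "Wx g k y = W g k \<lfloor>y * 16 ^ k\<rfloor>"
proof (induction k arbitrary: y)
  case 0
  then show ?case by (simp add: Wx_def vprod_def)
next
  case (Suc k)
  define J where "J = \<lfloor>y * 16 ^ Suc k\<rfloor>"
  have e1: "\<lfloor>16 * y * 16 ^ k\<rfloor> = J" unfolding J_def by (simp add: mult.commute mult.left_commute mult.assoc)
  have "J div 16 ^ k = \<lfloor>y * 16 ^ Suc k / real_of_int (16 ^ k)\<rfloor>"
    unfolding J_def by (rule floor_divide_real_eq_div[symmetric]) simp
  also have "\<dots> = \<lfloor>16 * y\<rfloor>" by (simp add: mult.commute)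
  finally have "J div 16 ^ k div 4 = \<lfloor>16 * y\<rfloor> div 4" by simp
  also have "\<dots> = \<lfloor>16 * y / real_of_int 4\<rfloor>" by (rule floor_divide_real_eq_div[symmetric]) simp
  also have "\<dots> = \<lfloor>4 * y\<rfloor>" by simp
  finally have e2: "J div 16 ^ k div 4 = \<lfloor>4 * y\<rfloor>" .
  show ?case unfolding Wx_Suc[OF assms] Suc J_def[symmetric] by (simp add: e1 e2)
qed

lemma aa_per: "aa g (t + 4 * q) = aa g t"
  by (simp add: aa_def)

lemma W_per: "W g k (j + q * 16 ^ k) = W g k j"
proof (induction k arbitrary: q)
  case 0
  then show ?case by simp
next
  case (Suc k)
  have "(j + q * 16 ^ Suc k) div 16 ^ k = j div 16 ^ k + 16 * q"
  proof -
    have "j + q * 16 ^ Suc k = j + (16 * q) * 16 ^ k" by simp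
    then show ?thesis by (simp only: div_mult_self1 power_not_zero) simp
  qed
  then have "(j + q * 16 ^ Suc k) div 16 ^ k div 4 = j div 16 ^ k div 4 + 4 * q"
    by simp
  moreover have "W g k (j + q * 16 ^ Suc k) = W g k j"
    using Suc[of "16 * q"] by (simp add: ac_simps)
  ultimately show ?case by (simp add: aa_per)
qed

lemma W_split:
  assumes "r < 16 ^ k"
  shows "W g (Suc k) (int (q * 16 ^ k + r)) = max 1 (aa g (int (q div 4)) * W g k (int r))"
proof -
  have i: "int (q * 16 ^ k + r) = int r + int q * 16 ^ k" by simp
  have "(int r + int q * 16 ^ k) div 16 ^ k = int q"
    using assms by (simp add: div_pos_pos_trivial)
  then have "(int r + int q * 16 ^ k) div 16 ^ k div 4 = int (q div 4)" by (simp add: zdiv_int)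
  then show ?thesis unfolding i by (simp add: W_per)
qed

lemma step_integral:
  fixes f :: "real \<Rightarrow> real" and g :: "int \<Rightarrow> real" and N :: nat
  assumes N: "N > 0" and fg: "\<And>x. 0 \<le> x \<Longrightarrow> x < 1 \<Longrightarrow> f x = g \<lfloor>x * N\<rfloor>"
  shows "(f has_integral (\<Sum>j<N. g (int j)) / N) {0..1}"
proof -
  have "k \<le> N \<Longrightarrow> (f has_integral (\<Sum>j<k. g (int j)) / N) {0..real k / N}" for k
  proof (induction k)
    case 0
    then show ?case using has_integral_refl(2)[of f 0] by simp
  next
    case (Suc k)
    have Npos: "real N > 0" using N by simp
    have le: "real k / N \<le> real (Suc k) / N" using Npos by (simp add: divide_right_mono)
    have piece: "(f has_integral g k / N) {real k / N..real (Suc k) / N}"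
    proof (rule has_integral_spike_finite[of "{real (Suc k) / N}"])
      show "((\<lambda>x. g k) has_integral g k / N) {real k / N..real (Suc k) / N}"
        proof -
        have "(real (Suc k) / N - real k / N) * g k = g k / N"
          using Npos by (simp add: field_simps)
        then show ?thesis using has_integral_const_real[of "g k" "real k / N" "real (Suc k) / N"] le by simp
      qed
    next
      fix x assume x: "x \<in> {real k / N..real (Suc k) / N} - {real (Suc k) / N}"
      then have x1: "real k / N \<le> x" "x < real (Suc k) / N" by auto
      have "real (Suc k) / N \<le> 1" using Suc.prems Npos by simp
      then have "0 \<le> x" "x < 1" using x1 by (auto intro: order_trans[rotated])
      moreover have "\<lfloor>x * N\<rfloor> = int k"
        using x1 Npos by (simp add: floor_eq_iff field_simps)
      ultimately show "f x = g (int k)" using fg by simp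
    qed simp
    have "(f has_integral (\<Sum>j<k. g (int j)) / N + g k / N) {0..real (Suc k) / N}"
      by (rule has_integral_combine[OF _ le Suc.IH[OF Suc_leD[OF Suc.prems]] piece]) simp
    then show ?case by (simp add: add_divide_distrib)
  qed
  from this[of N] show ?thesis using N by simp
qed

lemma top_digit: fixes y :: real shows "\<lfloor>y * 16 ^ Suc k\<rfloor> div 16 ^ k div 4 = \<lfloor>4 * y\<rfloor>"
proof -
  have "\<lfloor>y * 16 ^ Suc k\<rfloor> div 16 ^ k = \<lfloor>y * 16 ^ Suc k / real_of_int (16 ^ k)\<rfloor>"
    by (rule floor_divide_real_eq_div[symmetric]) simp
  also have "\<dots> = \<lfloor>16 * y\<rfloor>" by (simp add: mult.commute)
  finally have "\<lfloor>y * 16 ^ Suc k\<rfloor> div 16 ^ k div 4 = \<lfloor>16 * y\<rfloor> div 4" by simp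
  also have "\<dots> = \<lfloor>16 * y / real_of_int 4\<rfloor>" by (rule floor_divide_real_eq_div[symmetric]) simp
  also have "\<dots> = \<lfloor>4 * y\<rfloor>" by simp
  finally show ?thesis .
qed

lemma sum_split: fixes h :: "nat \<Rightarrow> real" and a b :: nat shows "(\<Sum>j<a*b. h j) = (\<Sum>q<a. \<Sum>r<b. h (q*b + r) :: real)"
proof -
  have "(\<Sum>j<a*b. h j) = (\<Sum>q<a. sum h {q*b..<q*b+b})"
    using sum.nat_group[of h b a] by simp
  also have "\<dots> = (\<Sum>q<a. \<Sum>r<b. h (q*b + r))"
  proof (rule sum.cong)
    fix q
    show "sum h {q*b..<q*b+b} = (\<Sum>r<b. h (q*b + r))"
      using sum.shift_bounds_nat_ivl[of h 0 "q*b" b] by (simp add: atLeast0LessThan add.commute)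
  qed simp
  finally show ?thesis .
qed

lemma sum_Suc:
  fixes H :: "real \<Rightarrow> real" shows
  "(\<Sum>j<16^Suc k. H (W g (Suc k) (int j))) =
   (\<Sum>d<4. 4 * (\<Sum>r<(16::nat)^k. H (max 1 (aa g (int d) * W g k (int r)))))"
proof -
  define F where "F d = (\<Sum>r<(16::nat)^k. H (max 1 (aa g (int d) * W g k (int r))))" for d
  have "(\<Sum>j<16^Suc k. H (W g (Suc k) (int j))) = (\<Sum>q<16. \<Sum>r<(16::nat)^k. H (W g (Suc k) (int (q*16^k + r))))"
    using sum_split[of "\<lambda>j. H (W g (Suc k) (int j))" 16 "16^k"] by simp
  also have "\<dots> = (\<Sum>q<16. F (q div 4))"
    unfolding F_def
  proof (intro sum.cong refl)
    fix q r assume "r \<in> {..<(16::nat)^k}"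
    then show "H (W g (Suc k) (int (q * 16 ^ k + r))) = H (max 1 (aa g (int (q div 4)) * W g k (int r)))"
      by (subst W_split) auto
  qed
  also have "\<dots> = (\<Sum>q<4*4. F (q div 4))" by simp
  also have "\<dots> = (\<Sum>d<4. \<Sum>e<4. F ((d*4+e) div 4))" by (rule sum_split)
  also have "\<dots> = (\<Sum>d<4. 4 * F d)" by (intro sum.cong refl) simp
  finally show ?thesis unfolding F_def .
qed

lemma sum4: "(\<Sum>d<4::nat. u d) = u 0 + u 1 + u 2 + (u 3 :: real)"
  by (simp add: eval_nat_numeral)

lemma aa_vals: "aa g 0 = 1" "aa g 1 = 1 + g" "aa g 2 = 1 - g" "aa g 3 = 1"
  by (simp_all add: aa_def)

definition SS :: "real \<Rightarrow> nat \<Rightarrow> real" where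
  "SS g k = (\<Sum>j<(16::nat)^k. W g k (int j))"

definition TT :: "real \<Rightarrow> nat \<Rightarrow> real \<Rightarrow> real" where
  "TT g k l = (\<Sum>j<(16::nat)^k. if W g k (int j) > l then 1 else 0)"

lemma tail:
  assumes g: "0 < g" "g < 1" and l: "0 < l"
  shows "TT g k l \<le> 16 ^ k / l"
  using l
proof (induction k arbitrary: l)
  case 0
  then show ?case by (cases "l < 1") (auto simp: TT_def field_simps)
next
  case (Suc k)
  show ?case
  proof (cases "l < 1")
    case True
    have "TT g (Suc k) l \<le> (\<Sum>j<(16::nat)^Suc k. 1)" unfolding TT_def by (rule sum_mono) auto
    also have "\<dots> = 16 ^ Suc k" by simp
    also have "\<dots> \<le> 16 ^ Suc k / l" using True Suc.prems by (simp add: le_divide_eq)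
    finally show ?thesis .
  next
    case False
    have ind: "(if max 1 (aa g (int d) * W g k r) > l then 1 else 0) =
      (if W g k r > l / aa g (int d) then 1 else (0::real))" for d r
    proof -
      have "max 1 (aa g (int d) * W g k r) > l \<longleftrightarrow> aa g (int d) * W g k r > l" using False by auto
      also have "\<dots> \<longleftrightarrow> W g k r > l / aa g (int d)" using aa_pos[OF g, of "int d"]
        by (simp add: pos_divide_less_eq mult.commute)
      finally show ?thesis by simp
    qed
    have "TT g (Suc k) l = (\<Sum>d<4. 4 * TT g k (l / aa g (int d)))"
      unfolding TT_def using sum_Suc[of "\<lambda>w. if w > l then 1 else 0"] by (simp add: ind)
    also have "\<dots> \<le> (\<Sum>d<4. 4 * (16 ^ k / (l / aa g (int d))))"
      using aa_pos[OF g] Suc.prems by (intro sum_mono mult_left_mono Suc.IH) auto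
    also have "\<dots> = 16 ^ Suc k / l" by (simp add: sum4 aa_vals divide_simps algebra_simps)
    finally show ?thesis .
  qed
qed

lemma incr:
  assumes g: "0 < g" "g < 1"
  defines "K \<equiv> (1 - g/2) / (1 - g)"
  shows "SS g (Suc k) \<ge> 16 * SS g k + 2 * g * (16 ^ k - TT g k K)"
proof -
  define A where "A d = (\<Sum>r<(16::nat)^k. max 1 (aa g (int d) * W g k (int r)))" for d
  have S1: "SS g (Suc k) = 4 * (A 0 + A 1 + A 2 + A 3)"
    unfolding SS_def A_def using sum_Suc[of "\<lambda>w. w"] by (simp add: sum4 algebra_simps)
  have Ad: "A d \<ge> aa g (int d) * SS g k" for d
  proof -
    have "aa g (int d) * SS g k = (\<Sum>r<(16::nat)^k. aa g (int d) * W g k (int r))"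
      unfolding SS_def by (simp add: sum_distrib_left)
    also have "\<dots> \<le> A d" unfolding A_def by (rule sum_mono) simp
    finally show ?thesis .
  qed
  have Kp: "(1 - g) * K = 1 - g/2" unfolding K_def using g by simp
  have pt: "max 1 ((1 - g) * w) \<ge> (1 - g) * w + g/2 * (1 - (if w > K then 1 else 0))" for w
  proof (cases "w > K")
    case False
    then have "(1 - g) * w \<le> (1 - g) * K" using g by (intro mult_left_mono) auto
    then show ?thesis using False Kp by auto
  qed auto
  have "A 2 \<ge> (\<Sum>r<(16::nat)^k. (1 - g) * W g k (int r) + g/2 * (1 - (if W g k (int r) > K then 1 else 0)))"
    unfolding A_def using pt by (intro sum_mono) (simp add: aa_vals(3)[symmetric])
  also have "(\<Sum>r<(16::nat)^k. (1 - g) * W g k (int r) + g/2 * (1 - (if W g k (int r) > K then 1 else 0)))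
     = (1 - g) * SS g k + g/2 * 16^k - g/2 * TT g k K"
    unfolding SS_def TT_def by (simp add: sum.distrib sum_distrib_left sum_subtractf right_diff_distrib)
  finally have A2: "A 2 \<ge> (1 - g) * SS g k + g/2 * 16^k - g/2 * TT g k K" .
  show ?thesis using S1 A2 Ad[of 0] Ad[of 1] Ad[of 3] by (simp add: aa_vals algebra_simps)
qed

lemma growth:
  assumes g: "0 < g" "g < 1"
  defines "K \<equiv> (1 - g/2) / (1 - g)"
  defines "\<delta> \<equiv> 2 * g * (1 - 1/K) / 16"
  shows "SS g k \<ge> 16 ^ k * (1 + k * \<delta>)"
proof (induction k)
  case 0
  then show ?case by (simp add: SS_def)
next
  case (Suc k)
  have Kpos: "K > 0" unfolding K_def using g by simp
  have T: "TT g k K \<le> 16 ^ k / K" by (rule tail[OF g Kpos])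
  have "SS g (Suc k) \<ge> 16 * SS g k + 2 * g * (16 ^ k - TT g k K)"
    using incr[OF g] unfolding K_def by simp
  moreover have "2 * g * (16 ^ k - TT g k K) \<ge> 2 * g * (16 ^ k - 16 ^ k / K)"
    using T g by (intro mult_left_mono) auto
  moreover have "2 * g * (16 ^ k - 16 ^ k / K) = 16 ^ Suc k * \<delta>"
    unfolding \<delta>_def by (simp add: algebra_simps diff_divide_distrib)
  ultimately have "SS g (Suc k) \<ge> 16 * SS g k + 16 ^ Suc k * \<delta>" by linarith
  moreover have "16 * SS g k \<ge> 16 * (16 ^ k * (1 + k * \<delta>))" using Suc.IH by simp
  ultimately show ?case by (simp add: algebra_simps)
qed

lemma W_ge: "W g k j \<ge> 1"
  by (cases k) auto

theorem lemma7p2: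
  fixes \<gamma> :: real
  assumes "0 < \<gamma>" and "\<gamma> < 1"
  shows "\<exists>c > 0. \<forall>m \<ge> 1. integral {0..1} (vmax \<gamma> m) \<ge> c * real m"
proof -
  note g = assms
  define K where "K = (1 - \<gamma>/2) / (1 - \<gamma>)"
  define \<delta> where "\<delta> = 2 * \<gamma> * (1 - 1/K) / 16"
  have K1: "K > 1" unfolding K_def using g by simp
  have dpos: "\<delta> > 0" unfolding \<delta>_def using K1 g by simp
  have "integral {0..1} (vmax \<gamma> m) \<ge> \<delta> * real m" if "m \<ge> 1" for m
  proof -
    obtain k where m: "m = Suc k" using \<open>m \<ge> 1\<close> by (cases m) auto
    define G where "G j = aa \<gamma> (j div 16^k div 4) * W \<gamma> k j" for j
    define N :: nat where "N = 16 ^ Suc k"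
    have fG: "vmax \<gamma> m x = G \<lfloor>x * real N\<rfloor>" for x
    proof -
      have e: "\<lfloor>16 * x * 16 ^ k\<rfloor> = \<lfloor>x * 16 ^ Suc k\<rfloor>" by (simp add: ac_simps)
      show ?thesis unfolding m vmax_eq[OF g] Wx_W[OF g] G_def N_def
        using top_digit[of x k] by (simp add: e)
    qed
    have hi: "(vmax \<gamma> m has_integral (\<Sum>j<N. G (int j)) / N) {0..1}"
      by (rule step_integral) (auto simp: N_def fG)
    have "(\<Sum>j<N. G (int j)) \<ge> (\<Sum>j<N. W \<gamma> (Suc k) (int j) - 1)"
    proof (rule sum_mono)
      fix j
      have "aa \<gamma> (int j div 16^k div 4) * W \<gamma> k (int j) \<ge> 0"
        using aa_pos[OF g] W_ge[of \<gamma> k] by (intro mult_nonneg_nonneg) (auto intro: less_imp_le order_trans[OF zero_le_one])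
      then show "W \<gamma> (Suc k) (int j) - 1 \<le> G (int j)" by (simp add: G_def)
    qed
    also have "(\<Sum>j<N. W \<gamma> (Suc k) (int j) - 1) = SS \<gamma> (Suc k) - N"
      unfolding SS_def N_def by (simp add: sum_subtractf)
    finally have "(\<Sum>j<N. G (int j)) / N \<ge> (SS \<gamma> (Suc k) - N) / N"
      by (simp add: N_def divide_right_mono)
    also have "(SS \<gamma> (Suc k) - N) / N \<ge> \<delta> * real m"
    proof -
      have "SS \<gamma> (Suc k) \<ge> N * (1 + Suc k * \<delta>)"
        using growth[OF g, of "Suc k"] unfolding N_def K_def \<delta>_def by simp
      then show ?thesis unfolding m N_def by (simp add: field_simps)
    qed
    finally show ?thesis using integral_unique[OF hi] by simp
  qed
  then show ?thesis using dpos by blast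
qed

end
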